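(* Let $\eta$ be an LTS-to-L$^2$TS transformation that in addition preserves and reflects $=_T^{\lambda}$, let $\mathcal{L}$ be an LTS and $s,t$ states of $\mathcal{L}$. Then $s=_T^{\lambda}t$ if and only if for every $\mathsf{LTL}_{-\mathsf{X}}$ formula $\psi$: $s\models^{\eta}\psi\iff t\models^{\eta}\psi$.
   Context: Fix a set $\mathrm{Act}$ of actions containing $\tau$ and a set $\mathbf{AP}$ of atomic propositions. An LTS is $(S,\to)$ with $\to\subseteq S\times\mathrm{Act}\times S$; paths are alternating sequences $s_0,a_1,s_1,\dots$ with $s_{k-1}\xrightarrow{a_k}s_k$, maximal if infinite or ending in a state without outgoing transitions. A colouring $\mathcal{C}$ maps states to colours; $\mathcal{C}(\pi)$ is obtained from $\mathcal{C}(s_0),a_1,\mathcal{C}(s_1),\dots$ by contracting every finite maximal consecutive subsequence $C,\tau,C,\dots,\tau,C$ and every infinite one $C,\tau,C,\tau,\dots$ to $C$; for $\pi$ from $s$ it is a $\mathcal{C}$-coloured trace of $s$, complete if $\pi$ is maximal, divergent if $\pi$ is infinite and $\mathcal{C}(\pi)$ finite. $\mathcal{C}$ is consistent if equally coloured states have the same $\mathcal{C}$-coloured traces, fully consistent if they have the same complete ones; a consistent $\mathcal{C}$ preserves divergence if they have the same divergent ones. $s\leftrightarrow_b t$ / $s\leftrightarrow_b^{ds}t$ / $s\leftrightarrow_b^{\Delta}t$ iff some consistent / fully consistent / consistent divergence preserving $\mathcal{C}$ has $\mathcal{C}(s)=\mathcal{C}(t)$. With $\mathbf{T}$ the trivial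 colouring (one colour for all states), $s=_T^{\lambda}t$ iff $s,t$ have the same complete $\mathbf{T}$-coloured traces. A Kripke structure is $(S,L,\to)$ with $L:S\to\mathcal{P}(\mathbf{AP})$, $\to\subseteq S\times S$; paths and maximal paths are sequences of states defined analogously. An L$^2$TS is $(S,L,\to)$ with $L:S\to\mathcal{P}(\mathbf{AP})$, $\to\subseteq S\times\mathrm{Act}\times S$; associated LTS $(S,\to)$, associated Kripke structure $(S,L,\{(s,t)\mid\exists a.\ s\xrightarrow{a}t\})$. It is consistent if (i) $s\xrightarrow{a}t$ implies ($L(s)=L(t)$ iff $a=\tau$); (ii) $s\xrightarrow{a}t$, $s'\xrightarrow{a}t'$, $L(s)=L(s')$ imply $L(t)=L(t')$; (iii) $s\xrightarrow{a}t$, $s'\xrightarrow{b}t'$, $L(s)=L(s')$, $L(t)=L(t')$ imply $a=b$. For an equivalence $\sim$ defined on LTSs and states $u,v$ of an L$^2$TS, $u\sim v$ means $L(u)=L(v)$ and $u\sim v$ in the associated LTS. An LTS-to-L$^2$TS transformation $\eta$ assigns to each LTS $\mathcal{L}$ a consistent L$^2$TS $\eta(\mathcal{L})$ and to each state $s$ of $\mathcal{L}$ a state $\eta(s)$ of $\eta(\mathcal{L})$ such that $s\sim t\iff\eta(s)\sim\eta(t)$ for each $\sim\in\{\leftrightarrow_b,\leftrightarrow_b^{ds},\leftrightarrow_b^{\Delta}\}$; it preserves and reflects $=_T^{\lambda}$ if also $s=_T^{\lambda}t\iff\eta(s)=_T^{\lambda}\eta(t)$. $\mathsf{LTL}_{-\mathsf{X}}$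 formulas: $\psi::=p\mid\neg\psi\mid\bigwedge\Psi'\mid\psi\,\mathsf{U}\,\psi$ ($p\in\mathbf{AP}$, $\Psi'$ arbitrary sets); on maximal paths of a Kripke structure: $\pi\models p$ iff $p$ is in the label of its first state; negation/conjunction as usual; $\pi\models\psi\,\mathsf{U}\,\psi'$ iff some suffix $\pi'$ of $\pi$ has $\pi'\models\psi'$ and $\pi''\models\psi$ for every suffix $\pi''$ of $\pi$ of which $\pi'$ is a proper suffix; a state satisfies $\psi$ iff all maximal paths from it do. For $s$ a state of $\mathcal{L}$: $s\models^{\eta}\psi$ iff $\eta(s)\models\psi$ in the Kripke structure associated to $\eta(\mathcal{L})$. *)

theory Defs
  imports Main "HOL-Library.Extended_Nat" "HOL-Library.Infinite_Set"
begin

text \<open>An LTS over state type 's and action type 'a is given by its transition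
relation; its states are all elements of type 's. The silent action tau is a
parameter of every notion that needs it.\<close>

type_synonym ('s,'a) lts = "('s \<times> 'a \<times> 's) set"

text \<open>A path s_0 a_1 s_1 ... is represented by a state sequence st, an action
sequence ac and a length len (number of transitions, possibly infinite):
the k-th transition (k = 0,1,...) is st k --ac k--> st (Suc k), for Suc k \<le> len.\<close>

definition is_path :: "('s,'a) lts \<Rightarrow> (nat \<Rightarrow> 's) \<Rightarrow> (nat \<Rightarrow> 'a) \<Rightarrow> enat \<Rightarrow> bool" where
  "is_path R st ac len \<longleftrightarrow> (\<forall>k. enat (Suc k) \<le> len \<longrightarrow> (st k, ac k, st (Suc k)) \<in> R)"

definition is_maximal_path :: "('s,'a) lts \<Rightarrow> (nat \<Rightarrow> 's) \<Rightarrow> (nat \<Rightarrow> 'a) \<Rightarrow> enat \<Rightarrow> bool" where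
  "is_maximal_path R st ac len \<longleftrightarrow> is_path R st ac len \<and>
     (len = \<infinity> \<or> (\<exists>n. len = enat n \<and> \<not> (\<exists>a u. (st n, a, u) \<in> R)))"

datatype ('a,'c) ctrace = FinT 'c "('a \<times> 'c) list" | InfT 'c "nat \<Rightarrow> 'a \<times> 'c"

text \<open>Steps that survive the contraction: exactly the steps that are not
tau-steps between equally coloured states.\<close>

definition visible_steps :: "'a \<Rightarrow> ('s \<Rightarrow> 'c) \<Rightarrow> (nat \<Rightarrow> 's) \<Rightarrow> (nat \<Rightarrow> 'a) \<Rightarrow> enat \<Rightarrow> nat set" where
  "visible_steps tau C st ac len =
     {k. enat (Suc k) \<le> len \<and> (ac k \<noteq> tau \<or> C (st k) \<noteq> C (st (Suc k)))}"

definition coloured_trace :: "'a \<Rightarrow> ('s \<Rightarrow> 'c) \<Rightarrow> (nat \<Rightarrow> 's) \<Rightarrow> (nat \<Rightarrow> 'a) \<Rightarrow> enat \<Rightarrow> ('a,'c) ctrace" where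
  "coloured_trace tau C st ac len =
     (let V = visible_steps tau C st ac len in
      if finite V then FinT (C (st 0)) (map (\<lambda>k. (ac k, C (st (Suc k)))) (sorted_list_of_set V))
      else InfT (C (st 0)) (\<lambda>n. let k = Infinite_Set.enumerate V n in (ac k, C (st (Suc k)))))"

definition ctraces :: "'a \<Rightarrow> ('s,'a) lts \<Rightarrow> ('s \<Rightarrow> 'c) \<Rightarrow> 's \<Rightarrow> ('a,'c) ctrace set" where
  "ctraces tau R C s = {coloured_trace tau C st ac len | st ac len. is_path R st ac len \<and> st 0 = s}"

definition complete_ctraces :: "'a \<Rightarrow> ('s,'a) lts \<Rightarrow> ('s \<Rightarrow> 'c) \<Rightarrow> 's \<Rightarrow> ('a,'c) ctrace set" where
  "complete_ctraces tau R C s =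
     {coloured_trace tau C st ac len | st ac len. is_maximal_path R st ac len \<and> st 0 = s}"

definition divergent_ctraces :: "'a \<Rightarrow> ('s,'a) lts \<Rightarrow> ('s \<Rightarrow> 'c) \<Rightarrow> 's \<Rightarrow> ('a,'c) ctrace set" where
  "divergent_ctraces tau R C s =
     {coloured_trace tau C st ac len | st ac len. is_path R st ac len \<and> st 0 = s \<and> len = \<infinity>
        \<and> finite (visible_steps tau C st ac len)}"

definition consistent_col :: "'a \<Rightarrow> ('s,'a) lts \<Rightarrow> ('s \<Rightarrow> 'c) \<Rightarrow> bool" where
  "consistent_col tau R C \<longleftrightarrow> (\<forall>s t. C s = C t \<longrightarrow> ctraces tau R C s = ctraces tau R C t)"

definition fully_consistent_col :: "'a \<Rightarrow> ('s,'a) lts \<Rightarrow> ('s \<Rightarrow> 'c) \<Rightarrow> bool" where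
  "fully_consistent_col tau R C \<longleftrightarrow>
     (\<forall>s t. C s = C t \<longrightarrow> complete_ctraces tau R C s = complete_ctraces tau R C t)"

definition div_preserving_col :: "'a \<Rightarrow> ('s,'a) lts \<Rightarrow> ('s \<Rightarrow> 'c) \<Rightarrow> bool" where
  "div_preserving_col tau R C \<longleftrightarrow> consistent_col tau R C \<and>
     (\<forall>s t. C s = C t \<longrightarrow> divergent_ctraces tau R C s = divergent_ctraces tau R C t)"

text \<open>Colours are taken to be sets of states (w.l.o.g.: whether a colouring is
(fully) consistent / divergence preserving only depends on its kernel).\<close>

definition branching_bisim :: "'a \<Rightarrow> ('s,'a) lts \<Rightarrow> 's \<Rightarrow> 's \<Rightarrow> bool" where
  "branching_bisim tau R s t \<longleftrightarrow> (\<exists>C :: 's \<Rightarrow> 's set. consistent_col tau R C \<and> C s = C t)"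

definition branching_bisim_ds :: "'a \<Rightarrow> ('s,'a) lts \<Rightarrow> 's \<Rightarrow> 's \<Rightarrow> bool" where
  "branching_bisim_ds tau R s t \<longleftrightarrow> (\<exists>C :: 's \<Rightarrow> 's set. fully_consistent_col tau R C \<and> C s = C t)"

definition branching_bisim_div :: "'a \<Rightarrow> ('s,'a) lts \<Rightarrow> 's \<Rightarrow> 's \<Rightarrow> bool" where
  "branching_bisim_div tau R s t \<longleftrightarrow> (\<exists>C :: 's \<Rightarrow> 's set. div_preserving_col tau R C \<and> C s = C t)"

text \<open>Weak completed trace equivalence =_T^lambda via the trivial colouring.\<close>

definition trace_eq :: "'a \<Rightarrow> ('s,'a) lts \<Rightarrow> 's \<Rightarrow> 's \<Rightarrow> bool" where
  "trace_eq tau R s t \<longleftrightarrow> complete_ctraces tau R (\<lambda>_. ()) s = complete_ctraces tau R (\<lambda>_. ()) t"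

type_synonym ('q,'a,'ap) l2ts = "('q \<Rightarrow> 'ap set) \<times> ('q \<times> 'a \<times> 'q) set"

definition consistent_l2ts :: "'a \<Rightarrow> ('q,'a,'ap) l2ts \<Rightarrow> bool" where
  "consistent_l2ts tau M \<longleftrightarrow> (case M of (L, R) \<Rightarrow>
     (\<forall>s a t. (s,a,t) \<in> R \<longrightarrow> (L s = L t \<longleftrightarrow> a = tau)) \<and>
     (\<forall>s a t s' t'. (s,a,t) \<in> R \<longrightarrow> (s',a,t') \<in> R \<longrightarrow> L s = L s' \<longrightarrow> L t = L t') \<and>
     (\<forall>s a t s' b t'. (s,a,t) \<in> R \<longrightarrow> (s',b,t') \<in> R \<longrightarrow> L s = L s' \<longrightarrow> L t = L t' \<longrightarrow> a = b))"

definition l2_equiv :: "(('q,'a) lts \<Rightarrow> 'q \<Rightarrow> 'q \<Rightarrow> bool) \<Rightarrow> ('q,'a,'ap) l2ts \<Rightarrow> 'q \<Rightarrow> 'q \<Rightarrow> bool" where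
  "l2_equiv eq M u v \<longleftrightarrow> fst M u = fst M v \<and> eq (snd M) u v"

definition lts_to_l2ts ::
  "'a \<Rightarrow> (('s,'a) lts \<Rightarrow> ('q,'a,'ap) l2ts) \<Rightarrow> (('s,'a) lts \<Rightarrow> 's \<Rightarrow> 'q) \<Rightarrow> bool" where
  "lts_to_l2ts tau etaL etaS \<longleftrightarrow> (\<forall>R.
     consistent_l2ts tau (etaL R) \<and>
     (\<forall>s t. branching_bisim tau R s t \<longleftrightarrow>
            l2_equiv (branching_bisim tau) (etaL R) (etaS R s) (etaS R t)) \<and>
     (\<forall>s t. branching_bisim_ds tau R s t \<longleftrightarrow>
            l2_equiv (branching_bisim_ds tau) (etaL R) (etaS R s) (etaS R t)) \<and>
     (\<forall>s t. branching_bisim_div tau R s t \<longleftrightarrow>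
            l2_equiv (branching_bisim_div tau) (etaL R) (etaS R s) (etaS R t)))"

definition preserves_reflects_trace_eq ::
  "'a \<Rightarrow> (('s,'a) lts \<Rightarrow> ('q,'a,'ap) l2ts) \<Rightarrow> (('s,'a) lts \<Rightarrow> 's \<Rightarrow> 'q) \<Rightarrow> bool" where
  "preserves_reflects_trace_eq tau etaL etaS \<longleftrightarrow> (\<forall>R s t.
     trace_eq tau R s t \<longleftrightarrow> l2_equiv (trace_eq tau) (etaL R) (etaS R s) (etaS R t))"

definition kripke_of :: "('q,'a,'ap) l2ts \<Rightarrow> ('q \<Rightarrow> 'ap set) \<times> ('q \<times> 'q) set" where
  "kripke_of M = (fst M, {(u, v). \<exists>a. (u, a, v) \<in> snd M})"

definition is_maximal_kpath :: "('q \<times> 'q) set \<Rightarrow> (nat \<Rightarrow> 'q) \<Rightarrow> enat \<Rightarrow> bool" where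
  "is_maximal_kpath R st len \<longleftrightarrow>
     (\<forall>k. enat (Suc k) \<le> len \<longrightarrow> (st k, st (Suc k)) \<in> R) \<and>
     (len = \<infinity> \<or> (\<exists>n. len = enat n \<and> \<not> (\<exists>v. (st n, v) \<in> R)))"

text \<open>LTL_{-X} formulas. Conjunction is over an arbitrary set of formulas, given
as a family indexed by a subset I of the index type 'i.\<close>

datatype ('ap,'i) ltl =
    Atom 'ap
  | Neg "('ap,'i) ltl"
  | Conj "'i set" "'i \<Rightarrow> ('ap,'i) ltl"
  | Until "('ap,'i) ltl" "('ap,'i) ltl"

text \<open>Satisfaction on a path (st, len); the suffix starting at position j is
(\<lambda>n. st (n + j), len - j).\<close>

primrec sat_path :: "('q \<Rightarrow> 'ap set) \<Rightarrow> ('ap,'i) ltl \<Rightarrow> (nat \<Rightarrow> 'q) \<Rightarrow> enat \<Rightarrow> bool" where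
  "sat_path L (Atom p) st len = (p \<in> L (st 0))"
| "sat_path L (Neg \<psi>) st len = (\<not> sat_path L \<psi> st len)"
| "sat_path L (Conj I f) st len = (\<forall>i\<in>I. sat_path L (f i) st len)"
| "sat_path L (Until \<psi> \<psi>') st len =
     (\<exists>j. enat j \<le> len \<and> sat_path L \<psi>' (\<lambda>n. st (n + j)) (len - enat j) \<and>
          (\<forall>i<j. sat_path L \<psi> (\<lambda>n. st (n + i)) (len - enat i)))"

definition sat_state :: "('q \<Rightarrow> 'ap set) \<times> ('q \<times> 'q) set \<Rightarrow> 'q \<Rightarrow> ('ap,'i) ltl \<Rightarrow> bool" where
  "sat_state K q \<psi> \<longleftrightarrow>
     (\<forall>st len. is_maximal_kpath (snd K) st len \<and> st 0 = q \<longrightarrow> sat_path (fst K) \<psi> st len)"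

definition models_eta ::
  "(('s,'a) lts \<Rightarrow> ('q,'a,'ap) l2ts) \<Rightarrow> (('s,'a) lts \<Rightarrow> 's \<Rightarrow> 'q) \<Rightarrow> ('s,'a) lts \<Rightarrow> 's \<Rightarrow> ('ap,'i) ltl \<Rightarrow> bool" where
  "models_eta etaL etaS R s \<psi> \<longleftrightarrow> sat_state (kripke_of (etaL R)) (etaS R s) \<psi>"

end

theory Submission imports Defs begin

fun bc :: "(nat \<Rightarrow> 'l) \<Rightarrow> nat \<Rightarrow> nat" where
  "bc l 0 = 0"
| "bc l (Suc n) = bc l n + (if l n = l (Suc n) then 0 else 1)"

lemma bc_mono: "m \<le> n \<Longrightarrow> bc l m \<le> bc l n"
  by (induction n rule: dec_induct) auto

lemma bc_Suc_le: "bc l (Suc n) \<le> Suc (bc l n)"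
  by simp

lemma bc_eq_label_le: "m \<le> n \<Longrightarrow> bc l m = bc l n \<Longrightarrow> l m = l n"
proof (induction n rule: dec_induct)
  case base then show ?case by simp
next
  case (step n)
  have "bc l m \<le> bc l n" using step(1) by (rule bc_mono)
  moreover have "bc l n \<le> bc l (Suc n)" by simp
  ultimately have e: "bc l n = bc l (Suc n)" "bc l m = bc l n" using step(4) by auto
  then have "l n = l (Suc n)" by (auto split: if_splits)
  with step(3)[OF e(2)] show ?case by simp
qed

lemma bc_eq_label: assumes "bc l m = bc l n" shows "l m = l n"
proof (cases "m \<le> n")
  case True
  then show ?thesis using bc_eq_label_le assms by blast
next
  case False
  then have "n \<le> m" by simp
  then show ?thesis using bc_eq_label_le[of n m l] assms by simp
qed

lemma bc_shift: "bc l (k + j) = bc l j + bc (\<lambda>n. l (n + j)) k"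
  by (induction k) auto

lemma bc_intermediate: "m \<le> bc l n \<Longrightarrow> \<exists>k\<le>n. bc l k = m"
proof (induction n)
  case 0 then show ?case by auto
next
  case (Suc n)
  show ?case
  proof (cases "m \<le> bc l n")
    case True then show ?thesis using Suc.IH by (meson le_Suc_eq)
  next
    case False
    then have "m = bc l (Suc n)" using Suc.prems bc_Suc_le[of l n] by linarith
    then show ?thesis by blast
  qed
qed

lemma bc_zero_iff: "bc l m = 0 \<longleftrightarrow> (\<forall>i\<le>m. l i = l 0)"
proof
  assume "bc l m = 0"
  then show "\<forall>i\<le>m. l i = l 0"
  proof (intro allI impI)
    fix i assume "i \<le> m"
    then have "bc l i \<le> bc l m" by (rule bc_mono)
    with \<open>bc l m = 0\<close> have "bc l i = bc l 0" by simp
    then show "l i = l 0" by (rule bc_eq_label)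
  qed
next
  assume "\<forall>i\<le>m. l i = l 0"
  then show "bc l m = 0"
  proof (induction m)
    case 0 then show ?case by simp
  next
    case (Suc m)
    have "l m = l 0" using Suc.prems[rule_format, of m] by simp
    moreover have "l (Suc m) = l 0" using Suc.prems[rule_format, of "Suc m"] by simp
    moreover have "\<forall>i\<le>m. l i = l 0"
      by (intro allI impI, rule Suc.prems[rule_format]) simp
    then have "bc l m = 0" by (rule Suc.IH)
    ultimately show ?case by simp
  qed
qed

definition SE :: "(nat \<Rightarrow> 'l) \<Rightarrow> enat \<Rightarrow> (nat \<Rightarrow> 'l) \<Rightarrow> enat \<Rightarrow> bool" where
  "SE l len l' len' \<longleftrightarrow>
     (\<forall>n n'. enat n \<le> len \<longrightarrow> enat n' \<le> len' \<longrightarrow> bc l n = bc l' n' \<longrightarrow> l n = l' n') \<and>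
     (\<forall>n. enat n \<le> len \<longrightarrow> (\<exists>n'. enat n' \<le> len' \<and> bc l' n' = bc l n)) \<and>
     (\<forall>n'. enat n' \<le> len' \<longrightarrow> (\<exists>n. enat n \<le> len \<and> bc l n = bc l' n'))"

lemma SE_sym: assumes "SE l len l' len'" shows "SE l' len' l len"
proof -
  note a = assms[unfolded SE_def]
  have 1: "\<forall>n n'. enat n \<le> len' \<longrightarrow> enat n' \<le> len \<longrightarrow> bc l' n = bc l n' \<longrightarrow> l' n = l n'"
  proof (intro allI impI)
    fix n n' assume "enat n \<le> len'" "enat n' \<le> len" "bc l' n = bc l n'"
    then show "l' n = l n'" using conjunct1[OF a] by (metis (no_types))
  qed
  show ?thesis unfolding SE_def using 1 conjunct2[OF a] by blast
qed

lemma enat_sub_le: "enat j \<le> len \<Longrightarrow> (enat n \<le> len - enat j) = (enat (n + j) \<le> len)"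
  by (cases len) auto

lemma SE_suffix_range:
  assumes "\<forall>n. enat n \<le> len \<longrightarrow> (\<exists>n'. enat n' \<le> len' \<and> bc l' n' = bc l n)"
    and "enat j \<le> len" "enat j' \<le> len'" "bc l j = bc l' j'"
  shows "\<forall>n. enat n \<le> len - enat j \<longrightarrow> (\<exists>n'. enat n' \<le> len' - enat j' \<and>
           bc (\<lambda>n. l' (n + j')) n' = bc (\<lambda>n. l (n + j)) n)"
proof (intro allI impI)
  fix n assume n: "enat n \<le> len - enat j"
  then have n2: "enat (n + j) \<le> len" using enat_sub_le[OF assms(2)] by simp
  then obtain k' where k': "enat k' \<le> len'" "bc l' k' = bc l (n + j)" using assms(1) by blast
  have sh: "bc l (n + j) = bc l j + bc (\<lambda>n. l (n + j)) n" by (rule bc_shift)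
  show "\<exists>n'. enat n' \<le> len' - enat j' \<and> bc (\<lambda>n. l' (n + j')) n' = bc (\<lambda>n. l (n + j)) n"
  proof (cases "bc (\<lambda>n. l (n + j)) n = 0")
    case True
    have "enat 0 \<le> len' - enat j'" by (simp add: zero_enat_def[symmetric])
    moreover have "bc (\<lambda>n. l' (n + j')) 0 = bc (\<lambda>n. l (n + j)) n" using True by simp
    ultimately show ?thesis by blast
  next
    case False
    then have "bc l' k' > bc l' j'" using k'(2) sh assms(4) by simp
    then have "j' \<le> k'"
    proof -
      assume a: "bc l' k' > bc l' j'"
      show "j' \<le> k'"
      proof (rule ccontr)
        assume "\<not> j' \<le> k'"
        then have "k' \<le> j'" by simp
        then have "bc l' k' \<le> bc l' j'" by (rule bc_mono)
        with a show False by simp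
      qed
    qed
    define d where "d = k' - j'"
    have d: "k' = d + j'" using \<open>j' \<le> k'\<close> unfolding d_def by simp
    have "bc l' k' = bc l' j' + bc (\<lambda>n. l' (n + j')) d" unfolding d by (rule bc_shift)
    moreover have "enat d \<le> len' - enat j'" using enat_sub_le[OF assms(3)] k'(1) d by simp
    moreover have "bc (\<lambda>n. l' (n + j')) d = bc (\<lambda>n. l (n + j)) n"
      using calculation(1) k'(2) sh assms(4) by linarith
    ultimately show ?thesis by blast
  qed
qed

lemma SE_suffix:
  assumes "SE l len l' len'" "enat j \<le> len" "enat j' \<le> len'" "bc l j = bc l' j'"
  shows "SE (\<lambda>n. l (n + j)) (len - enat j) (\<lambda>n. l' (n + j')) (len' - enat j')"
proof -
  have r1: "\<forall>n. enat n \<le> len - enat j \<longrightarrow> (\<exists>n'. enat n' \<le> len' - enat j' \<and>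
           bc (\<lambda>n. l' (n + j')) n' = bc (\<lambda>n. l (n + j)) n)"
    by (rule SE_suffix_range[OF conjunct1[OF conjunct2[OF assms(1)[unfolded SE_def]]] assms(2,3,4)])
  have r2: "\<forall>n. enat n \<le> len' - enat j' \<longrightarrow> (\<exists>n'. enat n' \<le> len - enat j \<and>
           bc (\<lambda>n. l (n + j)) n' = bc (\<lambda>n. l' (n + j')) n)"
    by (rule SE_suffix_range[OF conjunct2[OF conjunct2[OF assms(1)[unfolded SE_def]]] assms(3,2) assms(4)[symmetric]])
  have r3: "l (n + j) = l' (n' + j')" if "enat n \<le> len - enat j" "enat n' \<le> len' - enat j'"
      "bc (\<lambda>n. l (n + j)) n = bc (\<lambda>n. l' (n + j')) n'" for n n'
  proof -
    have "bc l (n + j) = bc l' (n' + j')" using that(3) assms(4) bc_shift[of l n j] bc_shift[of l' n' j'] by simp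
    moreover have "enat (n + j) \<le> len" using that(1) enat_sub_le[OF assms(2)] by simp
    moreover have "enat (n' + j') \<le> len'" using that(2) enat_sub_le[OF assms(3)] by simp
    ultimately show ?thesis using conjunct1[OF assms(1)[unfolded SE_def]] by blast
  qed
  show ?thesis unfolding SE_def
    apply (intro conjI)
    subgoal using r3 by blast
    subgoal using r1 by assumption
    subgoal using r2 by assumption
    done
qed

lemma sat_SE:
  "SE (\<lambda>n. L (st n)) len (\<lambda>n. L (st' n)) len' \<Longrightarrow> sat_path L \<psi> st len = sat_path L \<psi> st' len'"
proof (induction \<psi> arbitrary: st st' len len')
  case (Atom p)
  have h: "\<forall>n n'. enat n \<le> len \<longrightarrow> enat n' \<le> len' \<longrightarrow> bc (\<lambda>n. L (st n)) n = bc (\<lambda>n. L (st' n)) n' \<longrightarrow> L (st n) = L (st' n')"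
    using conjunct1[OF Atom.prems[unfolded SE_def]] .
  have "L (st 0) = L (st' 0)" using h[rule_format, of 0 0] by (simp add: zero_enat_def[symmetric])
  then show ?case by simp
next
  case (Neg \<psi>) then show ?case by simp
next
  case (Conj I f)
  have "sat_path L (f i) st len = sat_path L (f i) st' len'" for i
    using Conj.IH[OF rangeI Conj.prems] .
  then show ?case by simp
next
  case (Until \<psi>1 \<psi>2)
  have dir: "sat_path L (Until \<psi>1 \<psi>2) st' len'"
    if se: "SE (\<lambda>n. L (st n)) len (\<lambda>n. L (st' n)) len'" and sat: "sat_path L (Until \<psi>1 \<psi>2) st len"
    for st st' len len'
  proof -
    let ?l = "\<lambda>n. L (st n)" and ?l' = "\<lambda>n. L (st' n)"
    obtain j where j: "enat j \<le> len" "sat_path L \<psi>2 (\<lambda>n. st (n + j)) (len - enat j)"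
      "\<forall>i<j. sat_path L \<psi>1 (\<lambda>n. st (n + i)) (len - enat i)" using sat by auto
    note se2 = conjunct1[OF conjunct2[OF se[unfolded SE_def]]]
    note se3 = conjunct2[OF conjunct2[OF se[unfolded SE_def]]]
    have ex: "\<exists>k'. enat k' \<le> len' \<and> bc ?l' k' = bc ?l j" using se2 j(1) by blast
    define j' where "j' = (LEAST k'. enat k' \<le> len' \<and> bc ?l' k' = bc ?l j)"
    have j': "enat j' \<le> len'" "bc ?l' j' = bc ?l j"
      using LeastI_ex[OF ex] unfolding j'_def by auto
    have s2: "sat_path L \<psi>2 (\<lambda>n. st' (n + j')) (len' - enat j')"
      using Until.IH(2)[OF SE_suffix[OF se j(1) j'(1) j'(2)[symmetric]]] j(2) by simp
    have s1: "sat_path L \<psi>1 (\<lambda>n. st' (n + i')) (len' - enat i')" if "i' < j'" for i'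
    proof -
      have "enat i' \<le> enat j'" using that by simp
      then have i'len: "enat i' \<le> len'" using j'(1) by (rule order_trans)
      have "\<not> (enat i' \<le> len' \<and> bc ?l' i' = bc ?l j)" using not_less_Least[OF that[unfolded j'_def]] .
      then have ne: "bc ?l' i' \<noteq> bc ?l j" using i'len by blast
      have "bc ?l' i' \<le> bc ?l' j'" using that by (intro bc_mono) simp
      then have lt: "bc ?l' i' < bc ?l j" using ne j'(2) by simp
      obtain i where i: "enat i \<le> len" "bc ?l i = bc ?l' i'" using se3 i'len by blast
      have "i < j" using lt i(2) bc_mono[of j i ?l] by (cases "j \<le> i") auto
      then have "sat_path L \<psi>1 (\<lambda>n. st (n + i)) (len - enat i)" using j(3) by blast
      then show ?thesis using Until.IH(1)[OF SE_suffix[OF se i(1) i'len i(2)]] by simp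
    qed
    have s1': "\<forall>i<j'. sat_path L \<psi>1 (\<lambda>n. st' (n + i)) (len' - enat i)" using s1 by blast
    show ?thesis unfolding sat_path.simps
      apply (rule exI[of _ j'])
      using j'(1) s2 s1' by simp
  qed
  show ?case
  proof
    assume "sat_path L (Until \<psi>1 \<psi>2) st len"
    then show "sat_path L (Until \<psi>1 \<psi>2) st' len'" by (rule dir[OF Until.prems])
  next
    assume "sat_path L (Until \<psi>1 \<psi>2) st' len'"
    then show "sat_path L (Until \<psi>1 \<psi>2) st len" by (rule dir[OF SE_sym[OF Until.prems]])
  qed
qed


section \<open>Characteristic formulas\<close>

definition TT :: "('ap,'i) ltl" where "TT = Conj {} (\<lambda>_. undefined)"

definition cj :: "('ap + nat \<Rightarrow> 'i) \<Rightarrow> ('ap,'i) ltl \<Rightarrow> ('ap,'i) ltl \<Rightarrow> ('ap,'i) ltl" where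
  "cj f a b = Conj {f (Inr 0), f (Inr 1)} (\<lambda>i. if i = f (Inr 0) then a else b)"

definition lab :: "('ap + nat \<Rightarrow> 'i) \<Rightarrow> 'ap set \<Rightarrow> ('ap,'i) ltl" where
  "lab f A = Conj (range (\<lambda>p. f (Inl p)))
     (\<lambda>i. if inv (\<lambda>p. f (Inl p)) i \<in> A then Atom (inv (\<lambda>p. f (Inl p)) i) else Neg (Atom (inv (\<lambda>p. f (Inl p)) i)))"

definition GG :: "('ap,'i) ltl \<Rightarrow> ('ap,'i) ltl" where
  "GG \<phi> = Neg (Until TT (Neg \<phi>))"

lemma sat_TT: "sat_path L TT st len" by (simp add: TT_def)

lemma sat_cj: assumes "inj f"
  shows "sat_path L (cj f a b) st len \<longleftrightarrow> sat_path L a st len \<and> sat_path L b st len"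
proof -
  have "f (Inr 0) \<noteq> f (Inr 1)" using assms by (auto dest: injD)
  then show ?thesis by (auto simp: cj_def)
qed

lemma sat_lab: assumes "inj f"
  shows "sat_path L (lab f A) st len \<longleftrightarrow> L (st 0) = A"
proof -
  have inj2: "inj (\<lambda>p. f (Inl p))" using assms by (auto simp: inj_def)
  have "sat_path L (lab f A) st len \<longleftrightarrow> (\<forall>p. (p \<in> A \<longrightarrow> p \<in> L (st 0)) \<and> (p \<notin> A \<longrightarrow> p \<notin> L (st 0)))"
    by (simp add: lab_def inv_f_f[OF inj2])
  also have "\<dots> \<longleftrightarrow> L (st 0) = A" by blast
  finally show ?thesis .
qed

lemma sat_GG: "sat_path L (GG \<phi>) st len \<longleftrightarrow> (\<forall>j. enat j \<le> len \<longrightarrow> sat_path L \<phi> (\<lambda>n. st (n + j)) (len - enat j))"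
  by (simp add: GG_def sat_TT)

fun Pre :: "('ap + nat \<Rightarrow> 'i) \<Rightarrow> (nat \<Rightarrow> 'ap set) \<Rightarrow> nat \<Rightarrow> bool \<Rightarrow> ('ap,'i) ltl" where
  "Pre f B 0 lst = (if lst then cj f (lab f (B 0)) (GG (lab f (B 0))) else lab f (B 0))"
| "Pre f B (Suc n) lst = cj f (lab f (B 0)) (Until (lab f (B 0)) (Pre f (\<lambda>i. B (Suc i)) n lst))"

lemma zero_le_sub: "enat j \<le> len \<Longrightarrow> enat 0 \<le> len - enat j"
  using enat_sub_le[of j len 0] by simp

lemma sat_Pre:
  assumes f: "inj f" and B: "\<forall>i<n. B i \<noteq> B (Suc i)"
  shows "sat_path L (Pre f B n lst) st len \<longleftrightarrow>
    ((\<exists>k. enat k \<le> len \<and> bc (\<lambda>k. L (st k)) k = n) \<and>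
     (\<forall>k. enat k \<le> len \<longrightarrow> bc (\<lambda>k. L (st k)) k \<le> n \<longrightarrow> L (st k) = B (bc (\<lambda>k. L (st k)) k)) \<and>
     (lst \<longrightarrow> (\<forall>k. enat k \<le> len \<longrightarrow> bc (\<lambda>k. L (st k)) k \<le> n)))"
  using B
proof (induction n arbitrary: B st len)
  case 0
  let ?l = "\<lambda>k. L (st k)"
  have z: "enat 0 \<le> len" by (simp add: zero_enat_def[symmetric])
  have lhs: "sat_path L (Pre f B 0 lst) st len \<longleftrightarrow> L (st 0) = B 0 \<and> (lst \<longrightarrow> (\<forall>j. enat j \<le> len \<longrightarrow> L (st j) = B 0))"
    by (simp add: sat_cj[OF f] sat_lab[OF f] sat_GG)
  show ?case
  proof
    assume "sat_path L (Pre f B 0 lst) st len"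
    then have a: "L (st 0) = B 0" "lst \<longrightarrow> (\<forall>j. enat j \<le> len \<longrightarrow> L (st j) = B 0)" using lhs by blast+
    have r2: "L (st k) = B (bc ?l k)" if "bc ?l k \<le> 0" for k
    proof -
      have "bc ?l k = bc ?l 0" using that by simp
      then have "L (st k) = L (st 0)" by (rule bc_eq_label)
      then show ?thesis using a(1) that by simp
    qed
    have r3: "bc ?l k \<le> 0" if "lst" "enat k \<le> len" for k
    proof -
      have "\<forall>i\<le>k. ?l i = ?l 0"
      proof (intro allI impI)
        fix i assume "i \<le> k"
        then have "enat i \<le> enat k" by simp
        then have "enat i \<le> len" using that(2) by (rule order_trans)
        then have "?l i = B 0" using a(2) that(1) by blast
        then show "?l i = ?l 0" using a(1) by simp
      qed
      then have "bc ?l k = 0" using bc_zero_iff[of ?l k] by blast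
      then show ?thesis by simp
    qed
    show "(\<exists>k. enat k \<le> len \<and> bc ?l k = 0) \<and>
     (\<forall>k. enat k \<le> len \<longrightarrow> bc ?l k \<le> 0 \<longrightarrow> L (st k) = B (bc ?l k)) \<and>
     (lst \<longrightarrow> (\<forall>k. enat k \<le> len \<longrightarrow> bc ?l k \<le> 0))"
      using z r2 r3 by auto
  next
    assume r: "(\<exists>k. enat k \<le> len \<and> bc ?l k = 0) \<and>
     (\<forall>k. enat k \<le> len \<longrightarrow> bc ?l k \<le> 0 \<longrightarrow> L (st k) = B (bc ?l k)) \<and>
     (lst \<longrightarrow> (\<forall>k. enat k \<le> len \<longrightarrow> bc ?l k \<le> 0))"
    have "L (st 0) = B 0" using r z by (metis bc.simps(1) order_refl)
    moreover have "L (st j) = B 0" if "lst" "enat j \<le> len" for j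
      using r that by (metis le_zero_eq)
    ultimately show "sat_path L (Pre f B 0 lst) st len" using lhs by blast
  qed
next
  case (Suc n)
  let ?l = "\<lambda>k. L (st k)"
  have z: "enat 0 \<le> len" by (simp add: zero_enat_def[symmetric])
  have lhs: "sat_path L (Pre f B (Suc n) lst) st len \<longleftrightarrow> L (st 0) = B 0 \<and>
     (\<exists>j. enat j \<le> len \<and> sat_path L (Pre f (\<lambda>i. B (Suc i)) n lst) (\<lambda>m. st (m + j)) (len - enat j) \<and>
          (\<forall>i<j. L (st i) = B 0))"
    by (simp add: sat_cj[OF f] sat_lab[OF f])
  have Bs: "\<forall>i<n. B (Suc i) \<noteq> B (Suc (Suc i))" using Suc.prems by simp
  have B01: "B 0 \<noteq> B 1" using Suc.prems by simp
  note IH = Suc.IH[OF Bs]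
  have shift: "bc ?l (k + j) = bc ?l j + bc (\<lambda>k. L (st (k + j))) k" for k j
    using bc_shift[of ?l k j] by simp
  show ?case
  proof
    assume "sat_path L (Pre f B (Suc n) lst) st len"
    then obtain j where a0: "L (st 0) = B 0" and j: "enat j \<le> len"
      and sj: "sat_path L (Pre f (\<lambda>i. B (Suc i)) n lst) (\<lambda>m. st (m + j)) (len - enat j)"
      and pre: "\<forall>i<j. L (st i) = B 0" using lhs by blast
    note R = sj[unfolded IH]
    have R1: "\<exists>k. enat k \<le> len - enat j \<and> bc (\<lambda>k. L (st (k + j))) k = n" using R by blast
    have R2: "\<And>k. enat k \<le> len - enat j \<Longrightarrow> bc (\<lambda>k. L (st (k + j))) k \<le> n \<Longrightarrow>
        L (st (k + j)) = B (Suc (bc (\<lambda>k. L (st (k + j))) k))" using R by blast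
    have R3: "\<And>k. lst \<Longrightarrow> enat k \<le> len - enat j \<Longrightarrow> bc (\<lambda>k. L (st (k + j))) k \<le> n" using R by blast
    have lj: "L (st j) = B 1" using R2[OF zero_le_sub[OF j]] by simp
    have j0: "j \<noteq> 0" using lj a0 B01 by auto
    then obtain j0 where jj: "j = Suc j0" by (cases j) auto
    have "\<forall>i\<le>j0. ?l i = ?l 0"
    proof (intro allI impI)
      fix i assume "i \<le> j0"
      then have "i < j" using jj by simp
      then show "?l i = ?l 0" using pre a0 by simp
    qed
    then have b0: "bc ?l j0 = 0" using bc_zero_iff[of ?l j0] by blast
    have lj0: "L (st j0) = B 0" using pre jj by simp
    have bj: "bc ?l j = 1" using jj b0 lj0 lj B01 by simp
    have small: "bc ?l k = 0" if "k < j" for k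
      using bc_mono[of k j0 ?l] that jj b0 by simp
    have big: "bc ?l (d + j) = Suc (bc (\<lambda>k. L (st (k + j))) d)" for d
      using shift[of d j] bj by simp
    show "(\<exists>k. enat k \<le> len \<and> bc ?l k = Suc n) \<and>
     (\<forall>k. enat k \<le> len \<longrightarrow> bc ?l k \<le> Suc n \<longrightarrow> L (st k) = B (bc ?l k)) \<and>
     (lst \<longrightarrow> (\<forall>k. enat k \<le> len \<longrightarrow> bc ?l k \<le> Suc n))"
    proof (intro conjI allI impI)
      obtain k0 where k0: "enat k0 \<le> len - enat j" "bc (\<lambda>k. L (st (k + j))) k0 = n" using R1 by blast
      show "\<exists>k. enat k \<le> len \<and> bc ?l k = Suc n"
        using k0 enat_sub_le[OF j] big[of k0] by blast
    next
      fix k assume k: "enat k \<le> len" "bc ?l k \<le> Suc n"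
      show "L (st k) = B (bc ?l k)"
      proof (cases "k < j")
        case True then show ?thesis using small[OF True] pre by simp
      next
        case False
        define d where "d = k - j"
        have kd: "k = d + j" using False d_def by simp
        have "enat d \<le> len - enat j" using enat_sub_le[OF j] k(1) kd by simp
        moreover have "bc (\<lambda>k. L (st (k + j))) d \<le> n" using k(2) big[of d] kd by simp
        ultimately show ?thesis using R2 big[of d] kd by simp
      qed
    next
      fix k assume "lst" "enat k \<le> len"
      show "bc ?l k \<le> Suc n"
      proof (cases "k < j")
        case True then show ?thesis using small[OF True] by simp
      next
        case False
        define d where "d = k - j"
        have kd: "k = d + j" using False d_def by simp
        have "enat d \<le> len - enat j" using enat_sub_le[OF j] \<open>enat k \<le> len\<close> kd by simp
        then have "bc (\<lambda>k. L (st (k + j))) d \<le> n" using R3 \<open>lst\<close> by blast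
        then show ?thesis using big[of d] kd by simp
      qed
    qed
  next
    assume r: "(\<exists>k. enat k \<le> len \<and> bc ?l k = Suc n) \<and>
     (\<forall>k. enat k \<le> len \<longrightarrow> bc ?l k \<le> Suc n \<longrightarrow> L (st k) = B (bc ?l k)) \<and>
     (lst \<longrightarrow> (\<forall>k. enat k \<le> len \<longrightarrow> bc ?l k \<le> Suc n))"
    obtain k0 where k0: "enat k0 \<le> len" "bc ?l k0 = Suc n" using r by blast
    have LB: "\<And>k. enat k \<le> len \<Longrightarrow> bc ?l k \<le> Suc n \<Longrightarrow> L (st k) = B (bc ?l k)" using r by blast
    have LS: "\<And>k. lst \<Longrightarrow> enat k \<le> len \<Longrightarrow> bc ?l k \<le> Suc n" using r by blast
    have a0: "L (st 0) = B 0" using LB[OF z] by simp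
    obtain k1 where k1: "k1 \<le> k0" "bc ?l k1 = 1" using bc_intermediate[of 1 ?l k0] k0(2) by auto
    define j where "j = (LEAST k. bc ?l k = 1)"
    have bj: "bc ?l j = 1" unfolding j_def using k1(2) by (rule LeastI)
    have jk1: "j \<le> k1" unfolding j_def using k1(2) by (rule Least_le)
    have "enat j \<le> enat k0" using jk1 k1(1) by simp
    then have j: "enat j \<le> len" using k0(1) by (rule order_trans)
    have small: "bc ?l i = 0" if "i < j" for i
    proof -
      have "bc ?l i \<noteq> 1" using not_less_Least[OF that[unfolded j_def]] .
      moreover have "bc ?l i \<le> 1" using bc_mono[of i j ?l] that bj by simp
      ultimately show ?thesis by simp
    qed
    have pre: "\<forall>i<j. L (st i) = B 0"
    proof (intro allI impI)
      fix i assume "i < j"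
      then have "enat i \<le> len" using j by (meson enat_ord_simps(1) less_imp_le order_trans)
      then show "L (st i) = B 0" using LB small[OF \<open>i < j\<close>] by simp
    qed
    have big: "bc ?l (d + j) = Suc (bc (\<lambda>k. L (st (k + j))) d)" for d
      using shift[of d j] bj by simp
    have "sat_path L (Pre f (\<lambda>i. B (Suc i)) n lst) (\<lambda>m. st (m + j)) (len - enat j)"
      unfolding IH
    proof (intro conjI allI impI)
      have "\<not> k0 < j" using small k0(2) by fastforce
      then have kd: "k0 = (k0 - j) + j" by simp
      have "enat (k0 - j) \<le> len - enat j" using enat_sub_le[OF j] k0(1) kd by simp
      moreover have "bc (\<lambda>k. L (st (k + j))) (k0 - j) = n" using big[of "k0 - j"] kd k0(2) by simp
      ultimately show "\<exists>k. enat k \<le> len - enat j \<and> bc (\<lambda>k. L (st (k + j))) k = n" by blast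
    next
      fix k assume k: "enat k \<le> len - enat j" "bc (\<lambda>k. L (st (k + j))) k \<le> n"
      have "enat (k + j) \<le> len" using enat_sub_le[OF j] k(1) by simp
      moreover have "bc ?l (k + j) \<le> Suc n" using big[of k] k(2) by simp
      ultimately have "L (st (k + j)) = B (bc ?l (k + j))" by (rule LB)
      then show "L (st (k + j)) = B (Suc (bc (\<lambda>k. L (st (k + j))) k))" using big[of k] by simp
    next
      fix k assume "lst" "enat k \<le> len - enat j"
      then have "bc ?l (k + j) \<le> Suc n" using LS enat_sub_le[OF j] by simp
      then show "bc (\<lambda>k. L (st (k + j))) k \<le> n" using big[of k] by simp
    qed
    then show "sat_path L (Pre f B (Suc n) lst) st len" using lhs a0 j pre by blast
  qed
qed


definition blab :: "(nat \<Rightarrow> 'l) \<Rightarrow> enat \<Rightarrow> nat \<Rightarrow> 'l" where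
  "blab l len m = l (SOME k. enat k \<le> len \<and> bc l k = m)"

definition rng :: "(nat \<Rightarrow> 'l) \<Rightarrow> enat \<Rightarrow> nat set" where
  "rng l len = {bc l k | k. enat k \<le> len}"

lemma rng_iff: "m \<in> rng l len \<longleftrightarrow> (\<exists>k. enat k \<le> len \<and> bc l k = m)"
  unfolding rng_def by auto

lemma blab_eq: assumes "enat k \<le> len" shows "blab l len (bc l k) = l k"
proof -
  have ex: "\<exists>k'. enat k' \<le> len \<and> bc l k' = bc l k" using assms by blast
  have "bc l (SOME k'. enat k' \<le> len \<and> bc l k' = bc l k) = bc l k"
    using someI_ex[OF ex] by blast
  then show ?thesis unfolding blab_def by (rule bc_eq_label)
qed

lemma rng_down: assumes "m \<in> rng l len" "i \<le> m" shows "i \<in> rng l len"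
proof -
  obtain k where k: "enat k \<le> len" "bc l k = m" using assms(1) unfolding rng_def by blast
  obtain k' where k': "k' \<le> k" "bc l k' = i" using bc_intermediate[of i l k] assms(2) k(2) by blast
  have "enat k' \<le> enat k" using k'(1) by simp
  then have "enat k' \<le> len" using k(1) by (rule order_trans)
  then show ?thesis unfolding rng_def using k'(2) by blast
qed

lemma zero_in_rng: "0 \<in> rng l len"
  unfolding rng_def by (rule CollectI, rule exI[of _ 0]) (simp add: zero_enat_def[symmetric])

lemma blab_stutter: assumes "Suc m \<in> rng l len" shows "blab l len m \<noteq> blab l len (Suc m)"
proof -
  have "\<exists>k. Suc m = bc l k \<and> enat k \<le> len" using assms unfolding rng_def by simp
  then obtain k0 where k0: "enat k0 \<le> len" "bc l k0 = Suc m" by metis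
  define k where "k = (LEAST k. bc l k = Suc m)"
  have bk: "bc l k = Suc m" unfolding k_def using k0(2) by (rule LeastI)
  have kk0: "k \<le> k0" unfolding k_def using k0(2) by (rule Least_le)
  have "enat k \<le> enat k0" using kk0 by simp
  then have klen: "enat k \<le> len" using k0(1) by (rule order_trans)
  have "k \<noteq> 0" using bk by (cases k) auto
  then obtain p where p: "k = Suc p" by (cases k) auto
  have "bc l p \<noteq> Suc m" using not_less_Least[of p "\<lambda>k. bc l k = Suc m"] p unfolding k_def by simp
  moreover have "bc l (Suc p) \<le> Suc (bc l p)" by (rule bc_Suc_le)
  moreover have "bc l p \<le> bc l (Suc p)" by (rule bc_mono) simp
  ultimately have bp: "bc l p = m" using bk p by simp
  then have "l p \<noteq> l (Suc p)" using bk p by (auto split: if_splits)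
  moreover have "enat p \<le> len"
  proof -
    have "enat p \<le> enat k" using p by simp
    then show ?thesis using klen by (rule order_trans)
  qed
  moreover have "blab l len (Suc m) = l k" using blab_eq[OF klen, of l] bk by simp
  ultimately show ?thesis using blab_eq[of p len l] bp p by simp
qed

lemma char_formula:
  assumes f: "inj (f :: 'ap + nat \<Rightarrow> 'i)"
  shows "\<exists>\<Phi> :: ('ap,'i) ltl. sat_path L \<Phi> st len \<and>
    (\<forall>st' len'. sat_path L \<Phi> st' len' \<longrightarrow> SE (\<lambda>k. L (st k)) len (\<lambda>k. L (st' k)) len')"
proof -
  let ?l = "\<lambda>k. L (st k)"
  define B where "B = blab ?l len"
  define R where "R = rng ?l len"
  have BR: "L (st k) = B (bc ?l k)" if "enat k \<le> len" for k
    unfolding B_def using blab_eq[OF that, of ?l] by simp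
  have inR: "bc ?l k \<in> R" if "enat k \<le> len" for k unfolding R_def rng_iff using that by blast
  show ?thesis
  proof (cases "finite R")
    case True
    define M where "M = Max R"
    have MR: "M \<in> R" unfolding M_def using True zero_in_rng[of ?l len] R_def by (intro Max_in) auto
    have leM: "bc ?l k \<le> M" if "enat k \<le> len" for k unfolding M_def using True inR[OF that] by simp
    have stut: "\<forall>i<M. B i \<noteq> B (Suc i)"
    proof (intro allI impI)
      fix i assume "i < M"
      then have "Suc i \<in> R" using rng_down[of M ?l len "Suc i"] MR unfolding R_def by simp
      then show "B i \<noteq> B (Suc i)" unfolding B_def R_def by (rule blab_stutter)
    qed
    obtain kM where kM: "enat kM \<le> len" "bc ?l kM = M" using MR unfolding R_def rng_iff by blast
    note SP = sat_Pre[OF f stut, where L=L and lst=True]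
    show ?thesis
    proof (intro exI conjI allI impI)
      show "sat_path L (Pre f B M True) st len"
        unfolding SP using kM BR leM by blast
    next
      fix st' len' assume "sat_path L (Pre f B M True) st' len'"
      then have r: "(\<exists>k. enat k \<le> len' \<and> bc (\<lambda>k. L (st' k)) k = M) \<and>
       (\<forall>k. enat k \<le> len' \<longrightarrow> bc (\<lambda>k. L (st' k)) k \<le> M \<longrightarrow> L (st' k) = B (bc (\<lambda>k. L (st' k)) k)) \<and>
       (True \<longrightarrow> (\<forall>k. enat k \<le> len' \<longrightarrow> bc (\<lambda>k. L (st' k)) k \<le> M))" unfolding SP .
      obtain kM' where kM': "enat kM' \<le> len'" "bc (\<lambda>k. L (st' k)) kM' = M" using r by blast
      have LB': "L (st' k) = B (bc (\<lambda>k. L (st' k)) k)" if "enat k \<le> len'" for k using r that by blast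
      have LS': "bc (\<lambda>k. L (st' k)) k \<le> M" if "enat k \<le> len'" for k using r that by blast
      show "SE ?l len (\<lambda>k. L (st' k)) len'" unfolding SE_def
      proof (intro conjI allI impI)
        fix n n' assume "enat n \<le> len" "enat n' \<le> len'" "bc ?l n = bc (\<lambda>k. L (st' k)) n'"
        then show "L (st n) = L (st' n')" using BR LB' by metis
      next
        fix n assume n: "enat n \<le> len"
        obtain k where "k \<le> kM'" "bc (\<lambda>k. L (st' k)) k = bc ?l n"
          using bc_intermediate[of "bc ?l n" "\<lambda>k. L (st' k)" kM'] leM[OF n] kM'(2) by auto
        moreover have "enat k \<le> len'" using \<open>k \<le> kM'\<close> kM'(1) by (meson enat_ord_simps(1) order_trans)
        ultimately show "\<exists>n'. enat n' \<le> len' \<and> bc (\<lambda>k. L (st' k)) n' = bc ?l n" by blast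
      next
        fix n' assume n': "enat n' \<le> len'"
        obtain k where "k \<le> kM" "bc ?l k = bc (\<lambda>k. L (st' k)) n'"
          using bc_intermediate[of "bc (\<lambda>k. L (st' k)) n'" ?l kM] LS'[OF n'] kM(2) by auto
        moreover have "enat k \<le> len" using \<open>k \<le> kM\<close> kM(1) by (meson enat_ord_simps(1) order_trans)
        ultimately show "\<exists>n. enat n \<le> len \<and> bc ?l n = bc (\<lambda>k. L (st' k)) n'" by blast
      qed
    qed
  next
    case False
    have allR: "n \<in> R" for n
    proof -
      obtain m where "m \<in> R" "n \<le> m" using False infinite_nat_iff_unbounded_le by blast
      then show ?thesis using rng_down[of m ?l len n] unfolding R_def by simp
    qed
    have stut: "\<forall>i<n. B i \<noteq> B (Suc i)" for n
      using allR unfolding B_def R_def by (simp add: blab_stutter)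
    note SP = sat_Pre[OF f stut, where L=L and lst=False]
    define g where "g = (\<lambda>n. f (Inr n))"
    have ginj: "inj g" using f unfolding g_def by (auto simp: inj_def)
    define \<Phi> where "\<Phi> = Conj (range g) (\<lambda>i. Pre f B (inv g i) False)"
    have satP: "sat_path L \<Phi> st' len' \<longleftrightarrow> (\<forall>n. sat_path L (Pre f B n False) st' len')" for st' len'
      unfolding \<Phi>_def by (simp add: inv_f_f[OF ginj])
    show ?thesis
    proof (intro exI conjI allI impI)
      show "sat_path L \<Phi> st len" unfolding satP
      proof
        fix n
        obtain k where "enat k \<le> len" "bc ?l k = n" using allR[of n] unfolding R_def rng_iff by blast
        then show "sat_path L (Pre f B n False) st len" unfolding SP using BR by blast
      qed
    next
      fix st' len' assume "sat_path L \<Phi> st' len'"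
      then have r: "\<And>n. (\<exists>k. enat k \<le> len' \<and> bc (\<lambda>k. L (st' k)) k = n) \<and>
       (\<forall>k. enat k \<le> len' \<longrightarrow> bc (\<lambda>k. L (st' k)) k \<le> n \<longrightarrow> L (st' k) = B (bc (\<lambda>k. L (st' k)) k))"
        unfolding satP SP by blast
      have LB': "L (st' k) = B (bc (\<lambda>k. L (st' k)) k)" if "enat k \<le> len'" for k
        using r[of "bc (\<lambda>k. L (st' k)) k"] that by blast
      show "SE ?l len (\<lambda>k. L (st' k)) len'" unfolding SE_def
      proof (intro conjI allI impI)
        fix n n' assume "enat n \<le> len" "enat n' \<le> len'" "bc ?l n = bc (\<lambda>k. L (st' k)) n'"
        then show "L (st n) = L (st' n')" using BR LB' by metis
      next
        fix n assume n: "enat n \<le> len"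
        show "\<exists>n'. enat n' \<le> len' \<and> bc (\<lambda>k. L (st' k)) n' = bc ?l n" using r by blast
      next
        fix n' assume n': "enat n' \<le> len'"
        show "\<exists>n. enat n \<le> len \<and> bc ?l n = bc (\<lambda>k. L (st' k)) n'"
          using allR[of "bc (\<lambda>k. L (st' k)) n'"] unfolding R_def rng_iff by blast
      qed
    qed
  qed
qed


section \<open>Enumerating a set of naturals\<close>

definition cnt :: "nat set \<Rightarrow> enat" where
  "cnt V = (if finite V then enat (card V) else \<infinity>)"

definition ee :: "nat set \<Rightarrow> nat \<Rightarrow> nat" where
  "ee V n = (if finite V then sorted_list_of_set V ! n else enumerate V n)"

lemma ee_in: assumes "enat n < cnt V" shows "ee V n \<in> V"
proof (cases "finite V")
  case True
  then have "n < length (sorted_list_of_set V)" using assms by (simp add: cnt_def)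
  then have "sorted_list_of_set V ! n \<in> set (sorted_list_of_set V)" by (rule nth_mem)
  then show ?thesis using True by (simp add: ee_def)
next
  case False
  then show ?thesis by (simp add: ee_def enumerate_in_set)
qed

lemma ee_mono: assumes "m < n" "enat n < cnt V" shows "ee V m < ee V n"
proof (cases "finite V")
  case True
  then have "n < length (sorted_list_of_set V)" using assms by (simp add: cnt_def)
  moreover have "sorted_wrt (<) (sorted_list_of_set V)" by (rule strict_sorted_list_of_set)
  ultimately show ?thesis using True assms(1) by (simp add: ee_def sorted_wrt_nth_less)
next
  case False
  then show ?thesis using assms(1) by (simp add: ee_def enumerate_mono)
qed

lemma ee_ex: assumes "k \<in> V" shows "\<exists>n. enat n < cnt V \<and> ee V n = k"
proof (cases "finite V")
  case True
  then have "k \<in> set (sorted_list_of_set V)" using assms by simp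
  then obtain n where "n < length (sorted_list_of_set V)" "sorted_list_of_set V ! n = k"
    by (metis in_set_conv_nth)
  then show ?thesis using True by (intro exI[of _ n]) (simp add: ee_def cnt_def)
next
  case False
  then obtain n where "enumerate V n = k" using enumerate_Ex assms by blast
  then show ?thesis using False by (intro exI[of _ n]) (simp add: ee_def cnt_def)
qed

lemma card_below_ee: assumes "enat n < cnt V" shows "card {x\<in>V. x < ee V n} = n"
proof -
  have "{x\<in>V. x < ee V n} = ee V ` {..<n}"
  proof (intro equalityI subsetI)
    fix x assume x: "x \<in> {x\<in>V. x < ee V n}"
    then obtain m where m: "enat m < cnt V" "ee V m = x" using ee_ex by blast
    have "m < n"
    proof (rule ccontr)
      assume "\<not> m < n"
      then have "n \<le> m" by simp
      then have "ee V n \<le> ee V m" using ee_mono[of n m V] m(1) by (cases "n = m") auto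
      then show False using x m(2) by simp
    qed
    then show "x \<in> ee V ` {..<n}" using m(2) by blast
  next
    fix x assume "x \<in> ee V ` {..<n}"
    then obtain m where m: "m < n" "x = ee V m" by blast
    have "enat m < cnt V" using m(1) assms by (meson enat_ord_simps(2) order.strict_trans)
    then show "x \<in> {x\<in>V. x < ee V n}" using m ee_in ee_mono assms by blast
  qed
  moreover have "inj_on (ee V) {..<n}"
  proof (rule inj_onI)
    fix a b assume ab: "a \<in> {..<n}" "b \<in> {..<n}" "ee V a = ee V b"
    show "a = b"
    proof (rule ccontr)
      assume "a \<noteq> b"
      then consider "a < b" | "b < a" by linarith
      then show False
      proof cases
        case 1
        have bb: "enat b < cnt V" using ab(2) assms by (meson enat_ord_simps(2) lessThan_iff order.strict_trans)
        show False using ee_mono[OF 1 bb] ab(3) by simp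
      next
        case 2
        have aa: "enat a < cnt V" using ab(1) assms by (meson enat_ord_simps(2) lessThan_iff order.strict_trans)
        show False using ee_mono[OF 2 aa] ab(3) by simp
      qed
    qed
  qed
  ultimately show ?thesis by (simp add: card_image)
qed

section \<open>Visible steps and block counting\<close>

definition VS :: "(nat \<Rightarrow> 'l) \<Rightarrow> enat \<Rightarrow> nat set" where
  "VS l len = {k. enat (Suc k) \<le> len \<and> l k \<noteq> l (Suc k)}"

lemma bc_card: "enat k \<le> len \<Longrightarrow> bc l k = card {x \<in> VS l len. x < k}"
proof (induction k)
  case 0 then show ?case by simp
next
  case (Suc k)
  have kl: "enat k \<le> len" using Suc.prems by (meson Suc_ile_eq less_imp_le)
  have fin: "finite {x \<in> VS l len. x < k}" by simp
  show ?case
  proof (cases "l k = l (Suc k)")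
    case True
    then have "{x \<in> VS l len. x < Suc k} = {x \<in> VS l len. x < k}"
      unfolding VS_def using less_Suc_eq by auto
    then show ?thesis using Suc.IH[OF kl] True by simp
  next
    case False
    then have "{x \<in> VS l len. x < Suc k} = insert k {x \<in> VS l len. x < k}"
      unfolding VS_def using less_Suc_eq Suc.prems by auto
    then show ?thesis using Suc.IH[OF kl] False fin by simp
  qed
qed

lemma VS_len: "k \<in> VS l len \<Longrightarrow> enat (Suc k) \<le> len"
  unfolding VS_def by simp

lemma VS_neq: "k \<in> VS l len \<Longrightarrow> l k \<noteq> l (Suc k)"
  unfolding VS_def by simp

lemma bc_ee:
  assumes "enat n < cnt (VS l len)"
  shows "bc l (ee (VS l len) n) = n" "bc l (Suc (ee (VS l len) n)) = Suc n"
    "enat (ee (VS l len) n) \<le> len" "enat (Suc (ee (VS l len) n)) \<le> len"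
proof -
  have inV: "ee (VS l len) n \<in> VS l len" using ee_in[OF assms] .
  show sl: "enat (Suc (ee (VS l len) n)) \<le> len" using VS_len[OF inV] .
  then show l: "enat (ee (VS l len) n) \<le> len" by (meson Suc_ile_eq less_imp_le)
  show b: "bc l (ee (VS l len) n) = n" using bc_card[OF l, of l] card_below_ee[OF assms] by simp
  show "bc l (Suc (ee (VS l len) n)) = Suc n" using b VS_neq[OF inV] by simp
qed

lemma rng_cnt: "rng l len = {m. enat m \<le> cnt (VS l len)}"
proof (intro equalityI subsetI)
  fix m assume "m \<in> rng l len"
  then obtain k where k: "enat k \<le> len" "bc l k = m" unfolding rng_iff by blast
  show "m \<in> {m. enat m \<le> cnt (VS l len)}"
  proof (cases "finite (VS l len)")
    case True
    have "card {x \<in> VS l len. x < k} \<le> card (VS l len)" using True by (intro card_mono) auto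
    then show ?thesis using k bc_card[OF k(1), of l] True by (simp add: cnt_def)
  next
    case False then show ?thesis by (simp add: cnt_def)
  qed
next
  fix m assume "m \<in> {m. enat m \<le> cnt (VS l len)}"
  then have m: "enat m \<le> cnt (VS l len)" by simp
  show "m \<in> rng l len"
  proof (cases m)
    case 0 then show ?thesis using zero_in_rng by simp
  next
    case (Suc j)
    then have "enat j < cnt (VS l len)" using m by (simp add: Suc_ile_eq)
    then show ?thesis unfolding rng_iff using bc_ee[of j l len] Suc by blast
  qed
qed

lemma enat_set_eq: assumes "{m. enat m \<le> c} = {m. enat m \<le> (c'::enat)}" shows "c = c'"
proof (cases c)
  case (enat a)
  then have "a \<in> {m. enat m \<le> c'}" using assms by (metis mem_Collect_eq order_refl)
  then have ac: "enat a \<le> c'" by simp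
  show ?thesis
  proof (cases c')
    case (enat b)
    then have "b \<in> {m. enat m \<le> c}" using assms by (metis mem_Collect_eq order_refl)
    then show ?thesis using ac \<open>c = enat a\<close> enat by simp
  next
    case infinity
    then have "Suc a \<in> {m. enat m \<le> c}" using assms by simp
    then show ?thesis using \<open>c = enat a\<close> by simp
  qed
next
  case infinity
  show ?thesis
  proof (cases c')
    case (enat b)
    then have "Suc b \<in> {m. enat m \<le> c'}" using assms infinity by (metis enat_ord_code(3) mem_Collect_eq)
    then show ?thesis using enat by simp
  next
    case infinity then show ?thesis using \<open>c = \<infinity>\<close> by simp
  qed
qed

lemma SE_blab:
  "SE l len l' len' \<longleftrightarrow> rng l len = rng l' len' \<and> (\<forall>m\<in>rng l len. blab l len m = blab l' len' m)"
proof
  assume se: "SE l len l' len'"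
  note p1 = conjunct1[OF se[unfolded SE_def]]
  note p2 = conjunct1[OF conjunct2[OF se[unfolded SE_def]]]
  note p3 = conjunct2[OF conjunct2[OF se[unfolded SE_def]]]
  have "rng l len = rng l' len'"
  proof (intro equalityI subsetI)
    fix m assume "m \<in> rng l len"
    then obtain k where "enat k \<le> len" "bc l k = m" unfolding rng_iff by blast
    then show "m \<in> rng l' len'" using p2 unfolding rng_iff by metis
  next
    fix m assume "m \<in> rng l' len'"
    then obtain k where "enat k \<le> len'" "bc l' k = m" unfolding rng_iff by blast
    then show "m \<in> rng l len" using p3 unfolding rng_iff by metis
  qed
  moreover have "blab l len m = blab l' len' m" if mr: "m \<in> rng l len" for m
  proof -
    obtain k where k: "enat k \<le> len" "bc l k = m" using mr unfolding rng_iff by blast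
    obtain k' where k': "enat k' \<le> len'" "bc l' k' = bc l k" using p2 k(1) by blast
    have "l k = l' k'" using p1 k(1) k'(1) k'(2) by metis
    then show ?thesis using blab_eq[OF k(1), of l] blab_eq[OF k'(1), of l'] k k' by simp
  qed
  ultimately show "rng l len = rng l' len' \<and> (\<forall>m\<in>rng l len. blab l len m = blab l' len' m)" by blast
next
  assume a: "rng l len = rng l' len' \<and> (\<forall>m\<in>rng l len. blab l len m = blab l' len' m)"
  show "SE l len l' len'" unfolding SE_def
  proof (intro conjI allI impI)
    fix n n' assume n: "enat n \<le> len" "enat n' \<le> len'" "bc l n = bc l' n'"
    have "bc l n \<in> rng l len" unfolding rng_iff using n(1) by blast
    then have "blab l len (bc l n) = blab l' len' (bc l n)" using a by blast
    then show "l n = l' n'" using blab_eq[OF n(1), of l] blab_eq[OF n(2), of l'] n(3) by simp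
  next
    fix n assume n: "enat n \<le> len"
    have "bc l n \<in> rng l len" unfolding rng_iff using n by blast
    then have "bc l n \<in> rng l' len'" using conjunct1[OF a] by simp
    then show "\<exists>n'. enat n' \<le> len' \<and> bc l' n' = bc l n" unfolding rng_iff .
  next
    fix n' assume n: "enat n' \<le> len'"
    have "bc l' n' \<in> rng l' len'" unfolding rng_iff using n by blast
    then have "bc l' n' \<in> rng l len" using conjunct1[OF a] by simp
    then show "\<exists>n. enat n \<le> len \<and> bc l n = bc l' n'" unfolding rng_iff .
  qed
qed


section \<open>Traces in consistent L2TSs\<close>

lemma cons_facts:
  assumes "consistent_l2ts tau (L, R')"
  shows "\<And>s a t. (s,a,t) \<in> R' \<Longrightarrow> (L s = L t \<longleftrightarrow> a = tau)"
    and "\<And>s a t s' t'. (s,a,t) \<in> R' \<Longrightarrow> (s',a,t') \<in> R' \<Longrightarrow> L s = L s' \<Longrightarrow> L t = L t'"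
    and "\<And>s a t s' b t'. (s,a,t) \<in> R' \<Longrightarrow> (s',b,t') \<in> R' \<Longrightarrow> L s = L s' \<Longrightarrow> L t = L t' \<Longrightarrow> a = b"
  using assms unfolding consistent_l2ts_def by blast+

lemma vis_VS:
  assumes c: "consistent_l2ts tau (L, R')" and p: "is_path R' st ac len"
  shows "visible_steps tau (\<lambda>_. ()) st ac len = VS (\<lambda>k. L (st k)) len"
proof -
  have "(ac k \<noteq> tau) = (L (st k) \<noteq> L (st (Suc k)))" if "enat (Suc k) \<le> len" for k
  proof -
    have "(st k, ac k, st (Suc k)) \<in> R'" using p that unfolding is_path_def by blast
    then show ?thesis using cons_facts(1)[OF c] by blast
  qed
  then show ?thesis unfolding visible_steps_def VS_def by auto
qed

lemma ct_eq0:
  "((if finite V then FinT () (map (\<lambda>k. (ac k, ())) (sorted_list_of_set V))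
      else InfT () (\<lambda>n. (ac (enumerate V n), ()))) =
    (if finite V' then FinT () (map (\<lambda>k. (ac' k, ())) (sorted_list_of_set V'))
      else InfT () (\<lambda>n. (ac' (enumerate V' n), ())))) \<longleftrightarrow>
   (cnt V = cnt V' \<and> (\<forall>n. enat n < cnt V \<longrightarrow> ac (ee V n) = ac' (ee V' n)))"
proof (cases "finite V"; cases "finite V'")
  assume f: "finite V" "finite V'"
  have "(map (\<lambda>k. (ac k, ())) (sorted_list_of_set V) = map (\<lambda>k. (ac' k, ())) (sorted_list_of_set V')) \<longleftrightarrow>
    (card V = card V' \<and> (\<forall>n<card V. ac (sorted_list_of_set V ! n) = ac' (sorted_list_of_set V' ! n)))"
    by (auto simp: list_eq_iff_nth_eq)
  then show ?thesis using f by (simp add: cnt_def ee_def)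
next
  assume f: "finite V" "infinite V'"
  then show ?thesis by (simp add: cnt_def)
next
  assume f: "infinite V" "finite V'"
  then show ?thesis by (simp add: cnt_def)
next
  assume f: "infinite V" "infinite V'"
  then show ?thesis by (simp add: cnt_def ee_def fun_eq_iff)
qed

lemma ct_eq:
  "coloured_trace tau (\<lambda>_. ()) st ac len = coloured_trace tau (\<lambda>_. ()) st' ac' len' \<longleftrightarrow>
   (cnt (visible_steps tau (\<lambda>_. ()) st ac len) = cnt (visible_steps tau (\<lambda>_. ()) st' ac' len') \<and>
    (\<forall>n. enat n < cnt (visible_steps tau (\<lambda>_. ()) st ac len) \<longrightarrow>
       ac (ee (visible_steps tau (\<lambda>_. ()) st ac len) n) = ac' (ee (visible_steps tau (\<lambda>_. ()) st' ac' len') n)))"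
  unfolding coloured_trace_def Let_def by (rule ct_eq0)

lemma key:
  assumes c: "consistent_l2ts tau (L, R')"
    and p: "is_path R' st ac len" and p': "is_path R' st' ac' len'"
    and l0: "L (st 0) = L (st' 0)"
  shows "coloured_trace tau (\<lambda>_. ()) st ac len = coloured_trace tau (\<lambda>_. ()) st' ac' len' \<longleftrightarrow>
         SE (\<lambda>k. L (st k)) len (\<lambda>k. L (st' k)) len'"
proof -
  let ?l = "\<lambda>k. L (st k)" and ?l' = "\<lambda>k. L (st' k)"
  define V where "V = VS ?l len"
  define V' where "V' = VS ?l' len'"
  have ct: "coloured_trace tau (\<lambda>_. ()) st ac len = coloured_trace tau (\<lambda>_. ()) st' ac' len' \<longleftrightarrow>
     (cnt V = cnt V' \<and> (\<forall>n. enat n < cnt V \<longrightarrow> ac (ee V n) = ac' (ee V' n)))"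
    unfolding ct_eq vis_VS[OF c p] vis_VS[OF c p'] V_def V'_def ..
  have tr: "(st (ee V n), ac (ee V n), st (Suc (ee V n))) \<in> R'" if "enat n < cnt V" for n
    using p bc_ee(4)[OF that[unfolded V_def]] unfolding is_path_def V_def by blast
  have tr': "(st' (ee V' n), ac' (ee V' n), st' (Suc (ee V' n))) \<in> R'" if "enat n < cnt V'" for n
    using p' bc_ee(4)[OF that[unfolded V'_def]] unfolding is_path_def V'_def by blast
  have bl: "blab ?l len n = L (st (ee V n))" "blab ?l len (Suc n) = L (st (Suc (ee V n)))"
    if "enat n < cnt V" for n
    using blab_eq[OF bc_ee(3)[OF that[unfolded V_def]], of ?l] blab_eq[OF bc_ee(4)[OF that[unfolded V_def]], of ?l]
      bc_ee(1,2)[OF that[unfolded V_def]] unfolding V_def by simp_all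
  have bl': "blab ?l' len' n = L (st' (ee V' n))" "blab ?l' len' (Suc n) = L (st' (Suc (ee V' n)))"
    if "enat n < cnt V'" for n
    using blab_eq[OF bc_ee(3)[OF that[unfolded V'_def]], of ?l'] blab_eq[OF bc_ee(4)[OF that[unfolded V'_def]], of ?l']
      bc_ee(1,2)[OF that[unfolded V'_def]] unfolding V'_def by simp_all
  have z: "enat 0 \<le> len" "enat 0 \<le> len'" by (simp_all add: zero_enat_def[symmetric])
  have b0: "blab ?l len 0 = blab ?l' len' 0"
    using blab_eq[OF z(1), of ?l] blab_eq[OF z(2), of ?l'] l0 by simp
  have rc: "rng ?l len = {m. enat m \<le> cnt V}" "rng ?l' len' = {m. enat m \<le> cnt V'}"
    unfolding V_def V'_def by (rule rng_cnt)+
  show ?thesis unfolding ct SE_blab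
  proof
    assume a: "cnt V = cnt V' \<and> (\<forall>n. enat n < cnt V \<longrightarrow> ac (ee V n) = ac' (ee V' n))"
    have "\<forall>m. enat m \<le> cnt V \<longrightarrow> blab ?l len m = blab ?l' len' m"
    proof (intro allI)
      fix m show "enat m \<le> cnt V \<longrightarrow> blab ?l len m = blab ?l' len' m"
      proof (induction m)
        case 0 then show ?case using b0 by simp
      next
        case (Suc j)
        show ?case
        proof
          assume "enat (Suc j) \<le> cnt V"
          then have j: "enat j < cnt V" by (simp add: Suc_ile_eq)
          then have j': "enat j < cnt V'" using a by simp
          have "blab ?l len j = blab ?l' len' j" using Suc.IH j by simp
          then have "L (st (ee V j)) = L (st' (ee V' j))" using bl(1)[OF j] bl'(1)[OF j'] by simp
          moreover have "ac (ee V j) = ac' (ee V' j)" using a j by blast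
          ultimately have "L (st (Suc (ee V j))) = L (st' (Suc (ee V' j)))"
            using cons_facts(2)[OF c tr[OF j]] tr'[OF j'] by simp
          then show "blab ?l len (Suc j) = blab ?l' len' (Suc j)" using bl(2)[OF j] bl'(2)[OF j'] by simp
        qed
      qed
    qed
    then show "rng ?l len = rng ?l' len' \<and> (\<forall>m\<in>rng ?l len. blab ?l len m = blab ?l' len' m)"
      using rc a by simp
  next
    assume a: "rng ?l len = rng ?l' len' \<and> (\<forall>m\<in>rng ?l len. blab ?l len m = blab ?l' len' m)"
    have cc: "cnt V = cnt V'" using a rc by (intro enat_set_eq) simp
    have "ac (ee V n) = ac' (ee V' n)" if j: "enat n < cnt V" for n
    proof -
      have j': "enat n < cnt V'" using j cc by simp
      have "n \<in> rng ?l len" "Suc n \<in> rng ?l len" using rc j by (auto simp: Suc_ile_eq)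
      then have "blab ?l len n = blab ?l' len' n" "blab ?l len (Suc n) = blab ?l' len' (Suc n)"
        using a by blast+
      then have "L (st (ee V n)) = L (st' (ee V' n))" "L (st (Suc (ee V n))) = L (st' (Suc (ee V' n)))"
        using bl[OF j] bl'[OF j'] by simp_all
      then show ?thesis using cons_facts(3)[OF c tr[OF j] tr'[OF j']] by blast
    qed
    then show "cnt V = cnt V' \<and> (\<forall>n. enat n < cnt V \<longrightarrow> ac (ee V n) = ac' (ee V' n))" using cc by blast
  qed
qed


lemma kripke_simps: "fst (kripke_of (L, R')) = L" "snd (kripke_of (L, R')) = {(u, v). \<exists>a. (u, a, v) \<in> R'}"
  by (simp_all add: kripke_of_def)

lemma lts_to_kpath:
  assumes "is_maximal_path R' st ac len"
  shows "is_maximal_kpath {(u, v). \<exists>a. (u, a, v) \<in> R'} st len"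
  using assms unfolding is_maximal_path_def is_maximal_kpath_def is_path_def by blast

lemma kpath_to_lts:
  assumes "is_maximal_kpath {(u, v). \<exists>a. (u, a, v) \<in> R'} st len"
  shows "\<exists>ac. is_maximal_path R' st ac len"
proof -
  define ac where "ac = (\<lambda>k. SOME a. (st k, a, st (Suc k)) \<in> R')"
  have "is_path R' st ac len"
    unfolding is_path_def
  proof (intro allI impI)
    fix k assume "enat (Suc k) \<le> len"
    then have "\<exists>a. (st k, a, st (Suc k)) \<in> R'" using assms unfolding is_maximal_kpath_def by blast
    then show "(st k, ac k, st (Suc k)) \<in> R'" unfolding ac_def by (rule someI_ex)
  qed
  then show ?thesis using assms unfolding is_maximal_path_def is_maximal_kpath_def by blast
qed

lemma kpath_exists: "\<exists>st len. is_maximal_kpath K st len \<and> st 0 = q"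
proof -
  define nx where "nx = (\<lambda>u. SOME v. (u, v) \<in> K)"
  define st where "st = (\<lambda>k. (nx ^^ k) q)"
  have stS: "st (Suc k) = nx (st k)" for k unfolding st_def by simp
  show ?thesis
  proof (cases "\<forall>k. \<exists>v. (st k, v) \<in> K")
    case True
    have "is_maximal_kpath K st \<infinity>" unfolding is_maximal_kpath_def
    proof (intro conjI allI impI)
      fix k show "(st k, st (Suc k)) \<in> K" unfolding stS nx_def using True by (metis someI_ex)
    qed simp
    then show ?thesis unfolding st_def by (intro exI[of _ st] exI[of _ \<infinity>]) (simp add: st_def)
  next
    case False
    define n where "n = (LEAST k. \<not> (\<exists>v. (st k, v) \<in> K))"
    obtain k0 where "\<not> (\<exists>v. (st k0, v) \<in> K)" using False by blast
    then have nn: "\<not> (\<exists>v. (st n, v) \<in> K)" unfolding n_def by (rule LeastI)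
    have "is_maximal_kpath K st (enat n)" unfolding is_maximal_kpath_def
    proof (intro conjI allI impI)
      fix k assume "enat (Suc k) \<le> enat n"
      then have "k < n" by simp
      then have "\<exists>v. (st k, v) \<in> K" using not_less_Least[of k "\<lambda>k. \<not> (\<exists>v. (st k, v) \<in> K)"] n_def by blast
      then show "(st k, st (Suc k)) \<in> K" unfolding stS nx_def by (rule someI_ex)
    next
      show "enat n = \<infinity> \<or> (\<exists>m. enat n = enat m \<and> \<not> (\<exists>v. (st m, v) \<in> K))" using nn by blast
    qed
    then show ?thesis by (intro exI[of _ st] exI[of _ "enat n"]) (simp add: st_def)
  qed
qed

lemma transfer_dir:
  assumes c: "consistent_l2ts tau (L, R')" and luv: "L u = L v"
    and sub: "complete_ctraces tau R' (\<lambda>_. ()) v \<subseteq> complete_ctraces tau R' (\<lambda>_. ()) u"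
    and su: "sat_state (kripke_of (L, R')) u \<psi>"
  shows "sat_state (kripke_of (L, R')) v \<psi>"
  unfolding sat_state_def kripke_simps
proof (intro allI impI)
  fix st' len' assume a: "is_maximal_kpath {(u, v). \<exists>a. (u, a, v) \<in> R'} st' len' \<and> st' 0 = v"
  obtain ac' where ac': "is_maximal_path R' st' ac' len'" using kpath_to_lts a by blast
  have "coloured_trace tau (\<lambda>_. ()) st' ac' len' \<in> complete_ctraces tau R' (\<lambda>_. ()) v"
    unfolding complete_ctraces_def using ac' a by blast
  then have "coloured_trace tau (\<lambda>_. ()) st' ac' len' \<in> complete_ctraces tau R' (\<lambda>_. ()) u" using sub by blast
  then obtain st ac len where p: "is_maximal_path R' st ac len" "st 0 = u"
    and eq: "coloured_trace tau (\<lambda>_. ()) st' ac' len' = coloured_trace tau (\<lambda>_. ()) st ac len"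
    unfolding complete_ctraces_def by blast
  have pp: "is_path R' st ac len" using p(1) unfolding is_maximal_path_def by blast
  have pp': "is_path R' st' ac' len'" using ac' unfolding is_maximal_path_def by blast
  have l0: "L (st 0) = L (st' 0)" using p(2) a luv by simp
  have "SE (\<lambda>k. L (st k)) len (\<lambda>k. L (st' k)) len'"
    using key[OF c pp pp' l0] eq by simp
  moreover have "sat_path L \<psi> st len"
    using su lts_to_kpath[OF p(1)] p(2) unfolding sat_state_def kripke_simps by blast
  ultimately show "sat_path L \<psi> st' len'" using sat_SE by blast
qed

lemma find_path:
  assumes f: "inj (f :: 'ap + nat \<Rightarrow> 'i)"
    and eqv: "\<forall>\<psi> :: ('ap,'i) ltl. sat_state (kripke_of (L, R')) u \<psi> \<longleftrightarrow> sat_state (kripke_of (L, R')) v \<psi>"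
    and p: "is_maximal_kpath {(u, v). \<exists>a. (u, a, v) \<in> R'} st len" "st 0 = u"
  shows "\<exists>st' len'. is_maximal_kpath {(u, v). \<exists>a. (u, a, v) \<in> R'} st' len' \<and> st' 0 = v \<and>
           SE (\<lambda>k. L (st k)) len (\<lambda>k. L (st' k)) len'"
proof -
  obtain \<Phi> :: "('ap,'i) ltl" where phi: "sat_path L \<Phi> st len"
    "\<forall>st' len'. sat_path L \<Phi> st' len' \<longrightarrow> SE (\<lambda>k. L (st k)) len (\<lambda>k. L (st' k)) len'"
    using char_formula[OF f, of L st len] by blast
  have "\<not> sat_state (kripke_of (L, R')) u (Neg \<Phi>)"
    unfolding sat_state_def kripke_simps using p phi(1) by auto
  then have "\<not> sat_state (kripke_of (L, R')) v (Neg \<Phi>)" using eqv by blast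
  then obtain st' len' where "is_maximal_kpath {(u, v). \<exists>a. (u, a, v) \<in> R'} st' len'" "st' 0 = v"
      "sat_path L \<Phi> st' len'"
    unfolding sat_state_def kripke_simps by auto
  then show ?thesis using phi(2) by blast
qed

lemma incl_dir:
  assumes c: "consistent_l2ts tau (L, R')" and f: "inj (f :: 'ap + nat \<Rightarrow> 'i)"
    and eqv: "\<forall>\<psi> :: ('ap,'i) ltl. sat_state (kripke_of (L, R')) u \<psi> \<longleftrightarrow> sat_state (kripke_of (L, R')) v \<psi>"
  shows "complete_ctraces tau R' (\<lambda>_. ()) u \<subseteq> complete_ctraces tau R' (\<lambda>_. ()) v"
proof
  fix x assume "x \<in> complete_ctraces tau R' (\<lambda>_. ()) u"
  then obtain st ac len where p: "is_maximal_path R' st ac len" "st 0 = u"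
    and x: "x = coloured_trace tau (\<lambda>_. ()) st ac len"
    unfolding complete_ctraces_def by blast
  obtain st' len' where p': "is_maximal_kpath {(u, v). \<exists>a. (u, a, v) \<in> R'} st' len'" "st' 0 = v"
    and se: "SE (\<lambda>k. L (st k)) len (\<lambda>k. L (st' k)) len'"
    using find_path[OF f eqv lts_to_kpath[OF p(1)] p(2)] by blast
  obtain ac' where ac': "is_maximal_path R' st' ac' len'" using kpath_to_lts[OF p'(1)] by blast
  have z: "enat 0 \<le> len" "enat 0 \<le> len'" by (simp_all add: zero_enat_def[symmetric])
  have l0: "L (st 0) = L (st' 0)" using conjunct1[OF se[unfolded SE_def]] z by simp
  have pp: "is_path R' st ac len" using p(1) unfolding is_maximal_path_def by blast
  have pp': "is_path R' st' ac' len'" using ac' unfolding is_maximal_path_def by blast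
  have "coloured_trace tau (\<lambda>_. ()) st ac len = coloured_trace tau (\<lambda>_. ()) st' ac' len'"
    using key[OF c pp pp' l0] se by simp
  then show "x \<in> complete_ctraces tau R' (\<lambda>_. ()) v"
    unfolding complete_ctraces_def x using ac' p'(2) by blast
qed

lemma main_l2ts:
  assumes c: "consistent_l2ts tau (L, R')" and f: "inj (f :: 'ap + nat \<Rightarrow> 'i)"
  shows "(L u = L v \<and> trace_eq tau R' u v) \<longleftrightarrow>
    (\<forall>\<psi> :: ('ap,'i) ltl. sat_state (kripke_of (L, R')) u \<psi> \<longleftrightarrow> sat_state (kripke_of (L, R')) v \<psi>)"
proof
  assume a: "L u = L v \<and> trace_eq tau R' u v"
  then have e: "complete_ctraces tau R' (\<lambda>_. ()) u = complete_ctraces tau R' (\<lambda>_. ()) v"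
    unfolding trace_eq_def by blast
  show "\<forall>\<psi> :: ('ap,'i) ltl. sat_state (kripke_of (L, R')) u \<psi> \<longleftrightarrow> sat_state (kripke_of (L, R')) v \<psi>"
  proof
    fix \<psi> :: "('ap,'i) ltl"
    show "sat_state (kripke_of (L, R')) u \<psi> \<longleftrightarrow> sat_state (kripke_of (L, R')) v \<psi>"
      using transfer_dir[OF c, of u v \<psi>] transfer_dir[OF c, of v u \<psi>] a e by auto
  qed
next
  assume eqv: "\<forall>\<psi> :: ('ap,'i) ltl. sat_state (kripke_of (L, R')) u \<psi> \<longleftrightarrow> sat_state (kripke_of (L, R')) v \<psi>"
  then have eqv': "\<forall>\<psi> :: ('ap,'i) ltl. sat_state (kripke_of (L, R')) v \<psi> \<longleftrightarrow> sat_state (kripke_of (L, R')) u \<psi>"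
    by blast
  obtain st len where p: "is_maximal_kpath {(u, v). \<exists>a. (u, a, v) \<in> R'} st len" "st 0 = u"
    using kpath_exists[of "{(u, v). \<exists>a. (u, a, v) \<in> R'}" u] by blast
  obtain st' len' where p': "st' 0 = v" and se: "SE (\<lambda>k. L (st k)) len (\<lambda>k. L (st' k)) len'"
    using find_path[OF f eqv p] by blast
  have z: "enat 0 \<le> len" "enat 0 \<le> len'" by (simp_all add: zero_enat_def[symmetric])
  have "L (st 0) = L (st' 0)" using conjunct1[OF se[unfolded SE_def]] z by simp
  then have "L u = L v" using p(2) p' by simp
  moreover have "trace_eq tau R' u v" unfolding trace_eq_def
    using incl_dir[OF c f eqv] incl_dir[OF c f eqv'] by blast
  ultimately show "L u = L v \<and> trace_eq tau R' u v" by blast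
qed

theorem corollary9p3:
  fixes tau :: 'a
    and etaL :: "('s,'a) lts \<Rightarrow> ('q,'a,'ap) l2ts"
    and etaS :: "('s,'a) lts \<Rightarrow> 's \<Rightarrow> 'q"
    and R :: "('s,'a) lts"
    and s t :: 's
  assumes "lts_to_l2ts tau etaL etaS"
    and "preserves_reflects_trace_eq tau etaL etaS"
    and "\<exists>f :: 'ap + nat \<Rightarrow> 'i. inj f"
  shows "trace_eq tau R s t \<longleftrightarrow>
         (\<forall>\<psi> :: ('ap,'i) ltl. models_eta etaL etaS R s \<psi> \<longleftrightarrow> models_eta etaL etaS R t \<psi>)"
proof -
  obtain f :: "'ap + nat \<Rightarrow> 'i" where f: "inj f" using assms(3) by blast
  obtain L R' where M: "etaL R = (L, R')" by (cases "etaL R")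
  have c: "consistent_l2ts tau (L, R')" using assms(1) M unfolding lts_to_l2ts_def by metis
  have "trace_eq tau R s t \<longleftrightarrow> l2_equiv (trace_eq tau) (etaL R) (etaS R s) (etaS R t)"
    using assms(2) unfolding preserves_reflects_trace_eq_def by blast
  also have "\<dots> \<longleftrightarrow> (L (etaS R s) = L (etaS R t) \<and> trace_eq tau R' (etaS R s) (etaS R t))"
    unfolding l2_equiv_def M by simp
  also have "\<dots> \<longleftrightarrow> (\<forall>\<psi> :: ('ap,'i) ltl. sat_state (kripke_of (L, R')) (etaS R s) \<psi> \<longleftrightarrow>
                                          sat_state (kripke_of (L, R')) (etaS R t) \<psi>)"
    by (rule main_l2ts[OF c f])
  also have "\<dots> \<longleftrightarrow> (\<forall>\<psi> :: ('ap,'i) ltl. models_eta etaL etaS R s \<psi> \<longleftrightarrow> models_eta etaL etaS R t \<psi>)"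
    unfolding models_eta_def M ..
  finally show ?thesis .
qed

end
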